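(* Let $c,d$ be comonoids in $(\mathbf{Poly},\mathcal{y},\triangleleft)$ and let $e$ be a comonad on $c$ in $\mathbb{C}\mathbf{at}^\sharp$, i.e. a $(c,c)$-bicomodule with bicomodule maps $e\to c$ and $e\to e\triangleleft_c e$ satisfying counit and coassociativity laws; then the carrier polynomial $e$ is itself a comonoid in $\mathbf{Poly}$ equipped with a comonoid homomorphism $e\to c$. Under these hypotheses there is an equivalence, preserving underlying carrier polynomials, between $(e,d)$-bicomodules and $(c,d)$-bicomodules equipped with the structure of a left $e$-comodule (a $(c,d)$-bicomodule map $p\to e\triangleleft_c p$ satisfying counit and coassociativity).
   Context: Polynomials $p=\sum_{I\in p(1)}\mathcal{y}^{p[I]}$ form $\mathbf{Poly}$ with composition product $\triangleleft$ and unit $\mathcal{y}$ (one position, one direction); comonoids in $(\mathbf{Poly},\mathcal{y},\triangleleft)$ are small categories and comonoid homomorphisms are cofunctors. For comonoids $c,d$, a $(c,d)$-bicomodule is a polynomial $p$ with compatible coassociative counital coactions $p\to c\triangleleft p$ and $p\to p\triangleleft d$. $\mathbb{C}\mathbf{at}^\sharp$ is the pseudo-double category with objects comonoids, vertical morphisms comonoid homomorphisms, horizontal morphisms bicomodules composed by $p\triangleleft_dq$ (equalizer of $p\triangleleft q\rightrightarrows p\triangleleft d\triangleleft q$), horizontal identity on $c$ the bicomodule $c$, and squares polynomial maps compatible with coactions. *)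

theory Defs
  imports "HOL-Library.FuncSet"
begin

text \<open>A polynomial p = sum over I in p(1) of y^(p[I]) is given by its set of positions p(1)
and, for each position I, its set of directions p[I].\<close>

type_synonym ('i,'a) poly = "'i set \<times> ('i \<Rightarrow> 'a set)"

definition pos :: "('i,'a) poly \<Rightarrow> 'i set" where "pos p = fst p"
definition dir :: "('i,'a) poly \<Rightarrow> 'i \<Rightarrow> 'a set" where "dir p = snd p"

text \<open>A map of polynomials p \<rightarrow> q: forward on positions, backward on directions.\<close>
type_synonym ('i,'a,'j,'b) pmap = "('i \<Rightarrow> 'j) \<times> ('i \<Rightarrow> 'b \<Rightarrow> 'a)"

definition is_map :: "('i,'a) poly \<Rightarrow> ('j,'b) poly \<Rightarrow> ('i,'a,'j,'b) pmap \<Rightarrow> bool" where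
  "is_map p q f \<longleftrightarrow> (\<forall>i\<in>pos p. fst f i \<in> pos q \<and> (\<forall>b\<in>dir q (fst f i). snd f i b \<in> dir p i))"

text \<open>Equality of two maps p \<rightarrow> q (only the data on the carriers matters).\<close>
definition meq :: "('i,'a) poly \<Rightarrow> ('j,'b) poly \<Rightarrow> ('i,'a,'j,'b) pmap \<Rightarrow> ('i,'a,'j,'b) pmap \<Rightarrow> bool" where
  "meq p q f g \<longleftrightarrow> (\<forall>i\<in>pos p. fst f i = fst g i \<and> (\<forall>b\<in>dir q (fst f i). snd f i b = snd g i b))"

definition mid :: "('i,'a,'i,'a) pmap" where "mid = ((\<lambda>i. i), (\<lambda>i a. a))"

definition mcomp :: "('j,'b,'k,'c) pmap \<Rightarrow> ('i,'a,'j,'b) pmap \<Rightarrow> ('i,'a,'k,'c) pmap" where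
  "mcomp g f = ((\<lambda>i. fst g (fst f i)), (\<lambda>i c. snd f i (snd g (fst f i) c)))"

definition ypoly :: "(unit,unit) poly" where "ypoly = ({()}, \<lambda>_. {()})"

text \<open>Composition product p \<triangleleft> q: positions are pairs (I, h) with h : p[I] \<rightarrow> q(1),
directions at (I,h) are pairs (a,b) with a \<in> p[I], b \<in> q[h a].\<close>
definition tri :: "('i,'a) poly \<Rightarrow> ('j,'b) poly \<Rightarrow> ('i \<times> ('a \<Rightarrow> 'j), 'a \<times> 'b) poly" where
  "tri p q = ({(i,h). i \<in> pos p \<and> h \<in> dir p i \<rightarrow>\<^sub>E pos q},
              (\<lambda>(i,h). {(a,b). a \<in> dir p i \<and> b \<in> dir q (h a)}))"

text \<open>Action of the composition product on maps: given f : p \<rightarrow> p' and g : q \<rightarrow> q',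
hc p' f g : p \<triangleleft> q \<rightarrow> p' \<triangleleft> q'.\<close>
definition hc :: "('j,'b) poly \<Rightarrow> ('i,'a,'j,'b) pmap \<Rightarrow> ('k,'c,'l,'d) pmap
    \<Rightarrow> ('i \<times> ('a \<Rightarrow> 'k), 'a \<times> 'c, 'j \<times> ('b \<Rightarrow> 'l), 'b \<times> 'd) pmap" where
  "hc p' f g = ((\<lambda>(i,h). (fst f i, \<lambda>a'\<in>dir p' (fst f i). fst g (h (snd f i a')))),
                (\<lambda>(i,h) (a',b'). (snd f i a', snd g (h (snd f i a')) b')))"

definition assoc :: "('i,'a) poly \<Rightarrow> ('j,'b) poly
    \<Rightarrow> (('i \<times> ('a \<Rightarrow> 'j)) \<times> ('a \<times> 'b \<Rightarrow> 'k), ('a \<times> 'b) \<times> 'c,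
        'i \<times> ('a \<Rightarrow> 'j \<times> ('b \<Rightarrow> 'k)), 'a \<times> ('b \<times> 'c)) pmap" where
  "assoc p q = ((\<lambda>((i,h),k). (i, \<lambda>a\<in>dir p i. (h a, \<lambda>b\<in>dir q (h a). k (a,b)))),
                (\<lambda>((i,h),k) (a,(b,c)). ((a,b),c)))"

definition lu :: "(unit \<times> (unit \<Rightarrow> 'i), unit \<times> 'a, 'i, 'a) pmap" where
  "lu = ((\<lambda>(u,h). h ()), (\<lambda>(u,h) a. ((),a)))"

definition ru :: "('i \<times> ('a \<Rightarrow> unit), 'a \<times> unit, 'i, 'a) pmap" where
  "ru = ((\<lambda>(i,h). i), (\<lambda>(i,h) a. (a,())))"

definition comonoid :: "('i,'a) poly \<Rightarrow> ('i,'a,unit,unit) pmap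
    \<Rightarrow> ('i,'a,'i \<times> ('a \<Rightarrow> 'i),'a \<times> 'a) pmap \<Rightarrow> bool" where
  "comonoid c eps del \<longleftrightarrow>
     is_map c ypoly eps \<and> is_map c (tri c c) del \<and>
     meq c c (mcomp lu (mcomp (hc ypoly eps mid) del)) mid \<and>
     meq c c (mcomp ru (mcomp (hc c mid eps) del)) mid \<and>
     meq c (tri c (tri c c)) (mcomp (assoc c c) (mcomp (hc (tri c c) del mid) del))
                             (mcomp (hc c mid del) del)"

definition comonoid_hom :: "('i,'a) poly \<Rightarrow> ('i,'a,unit,unit) pmap \<Rightarrow> ('i,'a,'i \<times> ('a \<Rightarrow> 'i),'a \<times> 'a) pmap
    \<Rightarrow> ('j,'b) poly \<Rightarrow> ('j,'b,unit,unit) pmap \<Rightarrow> ('j,'b,'j \<times> ('b \<Rightarrow> 'j),'b \<times> 'b) pmap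
    \<Rightarrow> ('i,'a,'j,'b) pmap \<Rightarrow> bool" where
  "comonoid_hom e epse dele c epsc delc phi \<longleftrightarrow>
     is_map e c phi \<and>
     meq e ypoly (mcomp epsc phi) epse \<and>
     meq e (tri c c) (mcomp delc phi) (mcomp (hc c phi phi) dele)"

definition left_comodule :: "('i,'a) poly \<Rightarrow> ('i,'a,unit,unit) pmap \<Rightarrow> ('i,'a,'i \<times> ('a \<Rightarrow> 'i),'a \<times> 'a) pmap
    \<Rightarrow> ('k,'m) poly \<Rightarrow> ('k,'m,'i \<times> ('a \<Rightarrow> 'k),'a \<times> 'm) pmap \<Rightarrow> bool" where
  "left_comodule c eps del p lam \<longleftrightarrow>
     is_map p (tri c p) lam \<and>
     meq p p (mcomp lu (mcomp (hc ypoly eps mid) lam)) mid \<and>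
     meq p (tri c (tri c p)) (mcomp (assoc c c) (mcomp (hc (tri c c) del mid) lam))
                             (mcomp (hc c mid lam) lam)"

definition right_comodule :: "('j,'b) poly \<Rightarrow> ('j,'b,unit,unit) pmap \<Rightarrow> ('j,'b,'j \<times> ('b \<Rightarrow> 'j),'b \<times> 'b) pmap
    \<Rightarrow> ('k,'m) poly \<Rightarrow> ('k,'m,'k \<times> ('m \<Rightarrow> 'j),'m \<times> 'b) pmap \<Rightarrow> bool" where
  "right_comodule d eps del p rho \<longleftrightarrow>
     is_map p (tri p d) rho \<and>
     meq p p (mcomp ru (mcomp (hc p mid eps) rho)) mid \<and>
     meq p (tri p (tri d d)) (mcomp (assoc p d) (mcomp (hc (tri p d) rho mid) rho))
                             (mcomp (hc p mid del) rho)"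

definition bicomodule :: "('i,'a) poly \<Rightarrow> ('i,'a,unit,unit) pmap \<Rightarrow> ('i,'a,'i \<times> ('a \<Rightarrow> 'i),'a \<times> 'a) pmap
    \<Rightarrow> ('j,'b) poly \<Rightarrow> ('j,'b,unit,unit) pmap \<Rightarrow> ('j,'b,'j \<times> ('b \<Rightarrow> 'j),'b \<times> 'b) pmap
    \<Rightarrow> ('k,'m) poly \<Rightarrow> ('k,'m,'i \<times> ('a \<Rightarrow> 'k),'a \<times> 'm) pmap \<Rightarrow> ('k,'m,'k \<times> ('m \<Rightarrow> 'j),'m \<times> 'b) pmap
    \<Rightarrow> bool" where
  "bicomodule c epsc delc d epsd deld p lam rho \<longleftrightarrow>
     left_comodule c epsc delc p lam \<and> right_comodule d epsd deld p rho \<and>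
     meq p (tri c (tri p d)) (mcomp (assoc c p) (mcomp (hc (tri c p) lam mid) rho))
                             (mcomp (hc c mid rho) lam)"

definition bicomodule_map :: "('i,'a) poly \<Rightarrow> ('j,'b) poly
    \<Rightarrow> ('k,'m) poly \<Rightarrow> ('k,'m,'i \<times> ('a \<Rightarrow> 'k),'a \<times> 'm) pmap \<Rightarrow> ('k,'m,'k \<times> ('m \<Rightarrow> 'j),'m \<times> 'b) pmap
    \<Rightarrow> ('n,'o) poly \<Rightarrow> ('n,'o,'i \<times> ('a \<Rightarrow> 'n),'a \<times> 'o) pmap \<Rightarrow> ('n,'o,'n \<times> ('o \<Rightarrow> 'j),'o \<times> 'b) pmap
    \<Rightarrow> ('k,'m,'n,'o) pmap \<Rightarrow> bool" where
  "bicomodule_map c d p lam rho q lam' rho' f \<longleftrightarrow>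
     is_map p q f \<and>
     meq p (tri c q) (mcomp (hc c mid f) lam) (mcomp lam' f) \<and>
     meq p (tri q d) (mcomp (hc q f mid) rho) (mcomp rho' f)"

text \<open>Maps into the horizontal composite p \<triangleleft>_c q (the equalizer of p \<triangleleft> q \<rightrightarrows> p \<triangleleft> c \<triangleleft> q)
are represented, via the universal property of the equalizer, by maps into p \<triangleleft> q equalizing
the two parallel maps.  Since the inclusions of these equalizers (and their \<triangleleft>-composites)
into the ordinary composites are monic, all equations between such maps are checked after
composing with these inclusions.\<close>

definition lands_in_hcomp :: "('x,'z) poly \<Rightarrow> ('i,'a) poly \<Rightarrow> ('r,'s) poly
    \<Rightarrow> ('r,'s,'r \<times> ('s \<Rightarrow> 'i),'s \<times> 'a) pmap \<Rightarrow> ('n,'o) poly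
    \<Rightarrow> ('n,'o,'i \<times> ('a \<Rightarrow> 'n),'a \<times> 'o) pmap
    \<Rightarrow> ('x,'z,'r \<times> ('s \<Rightarrow> 'n),'s \<times> 'o) pmap \<Rightarrow> bool" where
  "lands_in_hcomp x c r rho_r n lam_n f \<longleftrightarrow>
     meq x (tri r (tri c n)) (mcomp (assoc r c) (mcomp (hc (tri r c) rho_r mid) f))
                             (mcomp (hc r mid lam_n) f)"

definition comonad_on :: "('i,'a) poly \<Rightarrow> ('i,'a,unit,unit) pmap \<Rightarrow> ('i,'a,'i \<times> ('a \<Rightarrow> 'i),'a \<times> 'a) pmap
    \<Rightarrow> ('r,'s) poly \<Rightarrow> ('r,'s,'i \<times> ('a \<Rightarrow> 'r),'a \<times> 's) pmap \<Rightarrow> ('r,'s,'r \<times> ('s \<Rightarrow> 'i),'s \<times> 'a) pmap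
    \<Rightarrow> ('r,'s,'i,'a) pmap \<Rightarrow> ('r,'s,'r \<times> ('s \<Rightarrow> 'r),'s \<times> 's) pmap \<Rightarrow> bool" where
  "comonad_on c epsc delc e lam rho eps del \<longleftrightarrow>
     bicomodule c epsc delc c epsc delc e lam rho \<and>
     \<comment> \<open>the counit is a (c,c)-bicomodule map e \<rightarrow> c\<close>
     bicomodule_map c c e lam rho c delc delc eps \<and>
     \<comment> \<open>the comultiplication is a map e \<rightarrow> e \<triangleleft>_c e ...\<close>
     is_map e (tri e e) del \<and>
     lands_in_hcomp e c e rho e lam del \<and>
     \<comment> \<open>... which is a (c,c)-bicomodule map\<close>
     meq e (tri c (tri e e)) (mcomp (assoc c e) (mcomp (hc (tri c e) lam mid) del))
                             (mcomp (hc c mid del) lam) \<and>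
     meq e (tri e (tri e c)) (mcomp (assoc e e) (mcomp (hc (tri e e) del mid) rho))
                             (mcomp (hc e mid rho) del) \<and>
     \<comment> \<open>counit laws: e \<rightarrow> e \<triangleleft>_c e \<rightarrow> c \<triangleleft>_c e \<cong> e and e \<rightarrow> e \<triangleleft>_c e \<rightarrow> e \<triangleleft>_c c \<cong> e are the identity\<close>
     meq e (tri c e) (mcomp (hc c eps mid) del) lam \<and>
     meq e (tri e c) (mcomp (hc e mid eps) del) rho \<and>
     \<comment> \<open>coassociativity\<close>
     meq e (tri e (tri e e)) (mcomp (assoc e e) (mcomp (hc (tri e e) del mid) del))
                             (mcomp (hc e mid del) del)"

definition left_comonad_comodule :: "('i,'a) poly \<Rightarrow> ('j,'b) poly
    \<Rightarrow> ('r,'s) poly \<Rightarrow> ('r,'s,'i \<times> ('a \<Rightarrow> 'r),'a \<times> 's) pmap \<Rightarrow> ('r,'s,'r \<times> ('s \<Rightarrow> 'i),'s \<times> 'a) pmap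
    \<Rightarrow> ('r,'s,'i,'a) pmap \<Rightarrow> ('r,'s,'r \<times> ('s \<Rightarrow> 'r),'s \<times> 's) pmap
    \<Rightarrow> ('k,'m) poly \<Rightarrow> ('k,'m,'i \<times> ('a \<Rightarrow> 'k),'a \<times> 'm) pmap \<Rightarrow> ('k,'m,'k \<times> ('m \<Rightarrow> 'j),'m \<times> 'b) pmap
    \<Rightarrow> ('k,'m,'r \<times> ('s \<Rightarrow> 'k),'s \<times> 'm) pmap \<Rightarrow> bool" where
  "left_comonad_comodule c d e lame rhoe epse dele p lam rho alpha \<longleftrightarrow>
     is_map p (tri e p) alpha \<and>
     lands_in_hcomp p c e rhoe p lam alpha \<and>
     \<comment> \<open>(c,d)-bicomodule map p \<rightarrow> e \<triangleleft>_c p\<close>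
     meq p (tri c (tri e p)) (mcomp (assoc c e) (mcomp (hc (tri c e) lame mid) alpha))
                             (mcomp (hc c mid alpha) lam) \<and>
     meq p (tri e (tri p d)) (mcomp (assoc e p) (mcomp (hc (tri e p) alpha mid) rho))
                             (mcomp (hc e mid rho) alpha) \<and>
     \<comment> \<open>counit: p \<rightarrow> e \<triangleleft>_c p \<rightarrow> c \<triangleleft>_c p \<cong> p is the identity\<close>
     meq p (tri c p) (mcomp (hc c epse mid) alpha) lam \<and>
     \<comment> \<open>coassociativity\<close>
     meq p (tri e (tri e p)) (mcomp (assoc e e) (mcomp (hc (tri e e) dele mid) alpha))
                             (mcomp (hc e mid alpha) alpha)"

end

theory Submission
  imports Defs
begin


lemma meq_refl: "meq p q f f" by (simp add: meq_def)
lemma meq_sym: "meq p q f g \<Longrightarrow> meq p q g f" by (simp add: meq_def)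
lemma meq_trans: "meq p q f g \<Longrightarrow> meq p q g h \<Longrightarrow> meq p q f h" by (simp add: meq_def)

lemma mcomp_assoc[simp]: "mcomp h (mcomp g f) = mcomp (mcomp h g) f"
  by (simp add: mcomp_def)
lemma mcomp_mid[simp]: "mcomp mid f = f" "mcomp f mid = f"
  by (simp_all add: mcomp_def mid_def)

lemma is_map_comp: "is_map p q f \<Longrightarrow> is_map q r g \<Longrightarrow> is_map p r (mcomp g f)"
  by (simp add: is_map_def mcomp_def)
lemma is_map_mid: "is_map p p mid" by (simp add: is_map_def mid_def)

lemma meq_comp: "is_map p q f \<Longrightarrow> is_map q r g \<Longrightarrow> meq p q f f' \<Longrightarrow> meq q r g g'
   \<Longrightarrow> meq p r (mcomp g f) (mcomp g' f')"
  by (simp add: is_map_def meq_def mcomp_def)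

lemma is_map_hc: "is_map p p' f \<Longrightarrow> is_map q q' g \<Longrightarrow> is_map (tri p q) (tri p' q') (hc p' f g)"
  unfolding is_map_def tri_def hc_def pos_def dir_def by (auto simp: PiE_iff)

lemma hc_comp: "is_map p p' f \<Longrightarrow> is_map p' p'' f' \<Longrightarrow> is_map q q' g \<Longrightarrow> is_map q' q'' g' \<Longrightarrow>
  meq (tri p q) (tri p'' q'') (mcomp (hc p'' f' g') (hc p' f g)) (hc p'' (mcomp f' f) (mcomp g' g))"
  unfolding is_map_def tri_def hc_def pos_def dir_def meq_def mcomp_def by (auto simp: PiE_iff)

lemma hc_cong: "is_map p p' f1 \<Longrightarrow> is_map q q' g1 \<Longrightarrow> meq p p' f1 f2 \<Longrightarrow> meq q q' g1 g2 \<Longrightarrow>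
  meq (tri p q) (tri p' q') (hc p' f1 g1) (hc p' f2 g2)"
  unfolding is_map_def tri_def hc_def pos_def dir_def meq_def mcomp_def by (auto simp: PiE_iff)

lemma hc_mid: "meq (tri p q) (tri p q) (hc p mid mid) mid"
  unfolding tri_def hc_def pos_def dir_def meq_def mid_def by (auto simp: PiE_iff)

lemma is_map_assoc: "is_map (tri (tri p q) r) (tri p (tri q r)) (assoc p q)"
  unfolding is_map_def tri_def assoc_def pos_def dir_def by (auto simp: PiE_iff)

lemma assoc_nat: "is_map p p' f \<Longrightarrow> is_map q q' g \<Longrightarrow> is_map r r' k \<Longrightarrow>
  meq (tri (tri p q) r) (tri p' (tri q' r'))
     (mcomp (assoc p' q') (hc (tri p' q') (hc p' f g) k)) (mcomp (hc p' f (hc q' g k)) (assoc p q))"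
  unfolding is_map_def tri_def hc_def pos_def dir_def meq_def mcomp_def assoc_def
  by (auto simp: PiE_iff fun_eq_iff)



lemma is_map_lu: "is_map (tri ypoly p) p lu"
  unfolding is_map_def tri_def lu_def pos_def dir_def ypoly_def by auto
lemma is_map_ru: "is_map (tri p ypoly) p ru"
  unfolding is_map_def tri_def ru_def pos_def dir_def ypoly_def by auto

lemmas [trans] = meq_trans
lemmas im = is_map_comp is_map_hc is_map_mid is_map_lu is_map_ru is_map_assoc

lemma meq_congL: "is_map p q f \<Longrightarrow> is_map q r g \<Longrightarrow> meq q r g g' \<Longrightarrow> meq p r (mcomp g f) (mcomp g' f)"
  by (rule meq_comp) (auto intro: meq_refl)
lemma meq_congR: "is_map p q f \<Longrightarrow> is_map q r g \<Longrightarrow> meq p q f f' \<Longrightarrow> meq p r (mcomp g f) (mcomp g f')"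
  by (rule meq_comp) (auto intro: meq_refl)

lemma comonad_facts:
  assumes "comonoid c epsc delc"
    and "comonad_on c epsc delc e lame rhoe epse dele"
  shows "is_map c ypoly epsc" "is_map c (tri c c) delc"
   "is_map e (tri c e) lame" "is_map e (tri e c) rhoe"
   "is_map e c epse" "is_map e (tri e e) dele"
   "meq e e (mcomp lu (mcomp (hc ypoly epsc mid) lame)) mid"
   "meq e e (mcomp ru (mcomp (hc e mid epsc) rhoe)) mid"
   "meq e (tri c e) (mcomp (hc c epse mid) dele) lame"
   "meq e (tri e c) (mcomp (hc e mid epse) dele) rhoe"
   "meq e (tri e (tri e e)) (mcomp (assoc e e) (mcomp (hc (tri e e) dele mid) dele))
                             (mcomp (hc e mid dele) dele)"
   "meq e (tri c c) (mcomp (hc c mid epse) lame) (mcomp delc epse)"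
  using assms
    unfolding comonoid_def comonad_on_def bicomodule_def left_comodule_def right_comodule_def
      bicomodule_map_def by (simp_all del: mcomp_assoc)

lemma part12:
  assumes A: "comonoid c epsc delc"
    and B: "comonad_on c epsc delc e lame rhoe epse dele"
  shows "comonoid e (mcomp epsc epse) dele \<and> comonoid_hom e (mcomp epsc epse) dele c epsc delc epse"
proof -
  note F = comonad_facts[OF A B]
  note iec = F(1) and idc = F(2) and il = F(3) and ir = F(4) and ie = F(5) and idl = F(6)
   and eLc = F(7) and eRc = F(8) and CL = F(9) and CR = F(10) and eA = F(11) and M1 = F(12)
  note ims = im iec idc il ir ie idl
  have a1: "meq (tri e e) (tri ypoly e) (hc ypoly (mcomp epsc epse) mid) (mcomp (hc ypoly epsc mid) (hc c epse mid))"
    using meq_sym[OF hc_comp[OF ie iec is_map_mid[of e] is_map_mid[of e]]] by simp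
  have "meq e e (mcomp lu (mcomp (hc ypoly (mcomp epsc epse) mid) dele))
                (mcomp lu (mcomp (mcomp (hc ypoly epsc mid) (hc c epse mid)) dele))"
    by (rule meq_refl a1 meq_comp ims)+
  also have "\<dots> = mcomp lu (mcomp (hc ypoly epsc mid) (mcomp (hc c epse mid) dele))" by simp
  also have "meq e e \<dots> (mcomp lu (mcomp (hc ypoly epsc mid) lame))"
    by (rule meq_refl CL meq_comp ims)+
  also note eLc
  finally have L: "meq e e (mcomp lu (mcomp (hc ypoly (mcomp epsc epse) mid) dele)) mid" .
  have a2: "meq (tri e e) (tri e ypoly) (hc e mid (mcomp epsc epse)) (mcomp (hc e mid epsc) (hc e mid epse))"
    using meq_sym[OF hc_comp[OF is_map_mid[of e] is_map_mid[of e] ie iec]] by simp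
  have "meq e e (mcomp ru (mcomp (hc e mid (mcomp epsc epse)) dele))
                (mcomp ru (mcomp (mcomp (hc e mid epsc) (hc e mid epse)) dele))"
    by (rule meq_refl a2 meq_comp ims)+
  also have "\<dots> = mcomp ru (mcomp (hc e mid epsc) (mcomp (hc e mid epse) dele))" by simp
  also have "meq e e \<dots> (mcomp ru (mcomp (hc e mid epsc) rhoe))"
    by (rule meq_refl CR meq_comp ims)+
  also note eRc
  finally have R: "meq e e (mcomp ru (mcomp (hc e mid (mcomp epsc epse)) dele)) mid" .
  have C1: "comonoid e (mcomp epsc epse) dele"
    unfolding comonoid_def using L R eA is_map_comp[OF ie iec] idl by (simp del: mcomp_assoc)
  have "meq e (tri c c) (mcomp delc epse) (mcomp (hc c mid epse) lame)"
    using M1 by (rule meq_sym)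
  also have "meq e (tri c c) \<dots> (mcomp (hc c mid epse) (mcomp (hc c epse mid) dele))"
    by (rule meq_refl CL[THEN meq_sym] meq_comp ims)+
  also have "\<dots> = mcomp (mcomp (hc c mid epse) (hc c epse mid)) dele" by simp
  also have "meq e (tri c c) \<dots> (mcomp (hc c epse epse) dele)"
    using hc_comp[OF ie is_map_mid[of c] is_map_mid[of e] ie]
    by - (rule meq_congL[OF idl], (rule ims)+, simp)
  finally have H: "meq e (tri c c) (mcomp delc epse) (mcomp (hc c epse epse) dele)" .
  show ?thesis using C1 H ie meq_refl unfolding comonoid_hom_def by blast
qed


lemma counit_equiv:
  assumes iec: "is_map c ypoly epsc" and ie: "is_map e c epse" and ia: "is_map p (tri e p) alpha"
  shows "meq p p (mcomp lu (mcomp (hc ypoly (mcomp epsc epse) mid) alpha)) mid \<longleftrightarrow>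
         meq p p (mcomp lu (mcomp (hc ypoly epsc mid) (mcomp (hc c epse mid) alpha))) mid"
proof -
  note ims = im iec ie ia
  have a1: "meq (tri e p) (tri ypoly p) (hc ypoly (mcomp epsc epse) mid) (mcomp (hc ypoly epsc mid) (hc c epse mid))"
    using meq_sym[OF hc_comp[OF ie iec is_map_mid[of p] is_map_mid[of p]]] by simp
  have "meq p p (mcomp lu (mcomp (hc ypoly (mcomp epsc epse) mid) alpha))
                (mcomp lu (mcomp (mcomp (hc ypoly epsc mid) (hc c epse mid)) alpha))"
    by (rule meq_refl a1 meq_comp ims)+
  then have X: "meq p p (mcomp lu (mcomp (hc ypoly (mcomp epsc epse) mid) alpha))
                (mcomp lu (mcomp (hc ypoly epsc mid) (mcomp (hc c epse mid) alpha)))" by simp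
  show ?thesis using meq_trans[OF meq_sym[OF X]] meq_trans[OF X] by blast
qed



lemma F1:
  assumes idc: "is_map c (tri c c) delc" and ie: "is_map e c epse" and idl: "is_map e (tri e e) dele"
    and ia: "is_map p (tri e p) alpha"
    and H: "meq e (tri c c) (mcomp delc epse) (mcomp (hc c epse epse) dele)"
    and aA: "meq p (tri e (tri e p)) (mcomp (assoc e e) (mcomp (hc (tri e e) dele mid) alpha)) (mcomp (hc e mid alpha) alpha)"
  shows "meq p (tri c (tri c p)) (mcomp (assoc c c) (mcomp (hc (tri c c) delc mid) (mcomp (hc c epse mid) alpha)))
           (mcomp (hc c mid (mcomp (hc c epse mid) alpha)) (mcomp (hc c epse mid) alpha))"
proof -
  note ims = im idc ie idl ia
  have h1: "meq (tri e p) (tri (tri c c) p) (mcomp (hc (tri c c) delc mid) (hc c epse mid)) (hc (tri c c) (mcomp delc epse) mid)"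
    using hc_comp[OF ie idc is_map_mid[of p] is_map_mid[of p]] by simp
  have h2: "meq (tri e p) (tri (tri c c) p) (hc (tri c c) (mcomp delc epse) mid) (hc (tri c c) (mcomp (hc c epse epse) dele) mid)"
    by (rule hc_cong[OF is_map_comp[OF ie idc] is_map_mid H meq_refl])
  have h3: "meq (tri e p) (tri (tri c c) p) (hc (tri c c) (mcomp (hc c epse epse) dele) mid) (mcomp (hc (tri c c) (hc c epse epse) mid) (hc (tri e e) dele mid))"
    using meq_sym[OF hc_comp[OF idl is_map_hc[OF ie ie] is_map_mid[of p] is_map_mid[of p]]] by simp
  have h4: "meq (tri (tri e e) p) (tri c (tri c p)) (mcomp (assoc c c) (hc (tri c c) (hc c epse epse) mid)) (mcomp (hc c epse (hc c epse mid)) (assoc e e))"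
    by (rule assoc_nat[OF ie ie is_map_mid])
  have h5: "meq (tri e p) (tri c (tri c p)) (mcomp (hc c epse (hc c epse mid)) (hc e mid alpha)) (hc c epse (mcomp (hc c epse mid) alpha))"
    using hc_comp[OF is_map_mid[of e] ie ia is_map_hc[OF ie is_map_mid[of p]]] by simp
  have h6: "meq (tri e p) (tri c (tri c p)) (hc c epse (mcomp (hc c epse mid) alpha)) (mcomp (hc c mid (mcomp (hc c epse mid) alpha)) (hc c epse mid))"
    using meq_sym[OF hc_comp[OF ie is_map_mid[of c] is_map_mid[of p] is_map_comp[OF ia is_map_hc[OF ie is_map_mid[of p]]]]] by simp
  have "meq p (tri c (tri c p)) (mcomp (assoc c c) (mcomp (hc (tri c c) delc mid) (mcomp (hc c epse mid) alpha)))
          (mcomp (assoc c c) (mcomp (mcomp (hc (tri c c) delc mid) (hc c epse mid)) alpha))" by (simp add: meq_refl)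
  also have "meq p (tri c (tri c p)) \<dots> (mcomp (assoc c c) (mcomp (hc (tri c c) (mcomp delc epse) mid) alpha))"
    by (rule meq_refl h1 meq_comp ims)+
  also have "meq p (tri c (tri c p)) \<dots> (mcomp (assoc c c) (mcomp (hc (tri c c) (mcomp (hc c epse epse) dele) mid) alpha))"
    by (rule meq_refl h2 meq_comp ims)+
  also have "meq p (tri c (tri c p)) \<dots> (mcomp (assoc c c) (mcomp (mcomp (hc (tri c c) (hc c epse epse) mid) (hc (tri e e) dele mid)) alpha))"
    by (rule meq_refl h3 meq_comp ims)+
  also have "\<dots> = mcomp (mcomp (assoc c c) (hc (tri c c) (hc c epse epse) mid)) (mcomp (hc (tri e e) dele mid) alpha)" by simp
  also have "meq p (tri c (tri c p)) \<dots> (mcomp (mcomp (hc c epse (hc c epse mid)) (assoc e e)) (mcomp (hc (tri e e) dele mid) alpha))"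
    by (rule meq_refl h4 meq_comp ims)+
  also have "\<dots> = mcomp (hc c epse (hc c epse mid)) (mcomp (assoc e e) (mcomp (hc (tri e e) dele mid) alpha))" by simp
  also have "meq p (tri c (tri c p)) \<dots> (mcomp (hc c epse (hc c epse mid)) (mcomp (hc e mid alpha) alpha))"
    by (rule meq_refl aA meq_comp ims)+
  also have "\<dots> = mcomp (mcomp (hc c epse (hc c epse mid)) (hc e mid alpha)) alpha" by simp
  also have "meq p (tri c (tri c p)) \<dots> (mcomp (hc c epse (mcomp (hc c epse mid) alpha)) alpha)"
    by (rule meq_refl h5 meq_comp ims)+
  also have "meq p (tri c (tri c p)) \<dots> (mcomp (mcomp (hc c mid (mcomp (hc c epse mid) alpha)) (hc c epse mid)) alpha)"
    by (rule meq_refl h6 meq_comp ims)+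
  also have "\<dots> = mcomp (hc c mid (mcomp (hc c epse mid) alpha)) (mcomp (hc c epse mid) alpha)" by simp
  finally show ?thesis .
qed



lemma F2:
  assumes ie: "is_map e c epse" and ia: "is_map p (tri e p) alpha" and irho: "is_map p (tri p d) rho"
    and aC: "meq p (tri e (tri p d)) (mcomp (assoc e p) (mcomp (hc (tri e p) alpha mid) rho)) (mcomp (hc e mid rho) alpha)"
  shows "meq p (tri c (tri p d)) (mcomp (assoc c p) (mcomp (hc (tri c p) (mcomp (hc c epse mid) alpha) mid) rho))
           (mcomp (hc c mid rho) (mcomp (hc c epse mid) alpha))"
proof -
  note ims = im ie ia irho
  have h1: "meq (tri p d) (tri (tri c p) d) (hc (tri c p) (mcomp (hc c epse mid) alpha) mid) (mcomp (hc (tri c p) (hc c epse mid) mid) (hc (tri e p) alpha mid))"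
    using meq_sym[OF hc_comp[OF ia is_map_hc[OF ie is_map_mid[of p]] is_map_mid[of d] is_map_mid[of d]]] by simp
  have h2: "meq (tri (tri e p) d) (tri c (tri p d)) (mcomp (assoc c p) (hc (tri c p) (hc c epse mid) mid)) (mcomp (hc c epse (hc p mid mid)) (assoc e p))"
    by (rule assoc_nat[OF ie is_map_mid is_map_mid])
  have h3: "meq (tri e (tri p d)) (tri c (tri p d)) (hc c epse (hc p mid mid)) (hc c epse mid)"
    by (rule hc_cong[OF ie is_map_hc[OF is_map_mid is_map_mid] meq_refl hc_mid])
  have h4: "meq (tri e p) (tri c (tri p d)) (mcomp (hc c epse mid) (hc e mid rho)) (hc c epse rho)"
    using hc_comp[OF is_map_mid[of e] ie irho is_map_mid[of "tri p d"]] by simp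
  have h5: "meq (tri e p) (tri c (tri p d)) (hc c epse rho) (mcomp (hc c mid rho) (hc c epse mid))"
    using meq_sym[OF hc_comp[OF ie is_map_mid[of c] is_map_mid[of p] irho]] by simp
  have "meq p (tri c (tri p d)) (mcomp (assoc c p) (mcomp (hc (tri c p) (mcomp (hc c epse mid) alpha) mid) rho))
     (mcomp (assoc c p) (mcomp (mcomp (hc (tri c p) (hc c epse mid) mid) (hc (tri e p) alpha mid)) rho))"
    by (rule meq_refl h1 meq_comp ims)+
  also have "\<dots> = mcomp (mcomp (assoc c p) (hc (tri c p) (hc c epse mid) mid)) (mcomp (hc (tri e p) alpha mid) rho)" by simp
  also have "meq p (tri c (tri p d)) \<dots> (mcomp (mcomp (hc c epse (hc p mid mid)) (assoc e p)) (mcomp (hc (tri e p) alpha mid) rho))"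
    by (rule meq_refl h2 meq_comp ims)+
  also have "meq p (tri c (tri p d)) \<dots> (mcomp (mcomp (hc c epse mid) (assoc e p)) (mcomp (hc (tri e p) alpha mid) rho))"
    by (rule meq_refl h3 meq_comp ims)+
  also have "\<dots> = mcomp (hc c epse mid) (mcomp (assoc e p) (mcomp (hc (tri e p) alpha mid) rho))" by simp
  also have "meq p (tri c (tri p d)) \<dots> (mcomp (hc c epse mid) (mcomp (hc e mid rho) alpha))"
    by (rule meq_refl aC meq_comp ims)+
  also have "\<dots> = mcomp (mcomp (hc c epse mid) (hc e mid rho)) alpha" by simp
  also have "meq p (tri c (tri p d)) \<dots> (mcomp (hc c epse rho) alpha)"
    by (rule meq_refl h4 meq_comp ims)+
  also have "meq p (tri c (tri p d)) \<dots> (mcomp (mcomp (hc c mid rho) (hc c epse mid)) alpha)"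
    by (rule meq_refl h5 meq_comp ims)+
  also have "\<dots> = mcomp (hc c mid rho) (mcomp (hc c epse mid) alpha)" by simp
  finally show ?thesis .
qed

lemma F3:
  assumes ie: "is_map e c epse" and idl: "is_map e (tri e e) dele" and ir: "is_map e (tri e c) rhoe"
    and ia: "is_map p (tri e p) alpha"
    and CR: "meq e (tri e c) (mcomp (hc e mid epse) dele) rhoe"
    and aA: "meq p (tri e (tri e p)) (mcomp (assoc e e) (mcomp (hc (tri e e) dele mid) alpha)) (mcomp (hc e mid alpha) alpha)"
  shows "meq p (tri e (tri c p)) (mcomp (assoc e c) (mcomp (hc (tri e c) rhoe mid) alpha))
           (mcomp (hc e mid (mcomp (hc c epse mid) alpha)) alpha)"
proof -
  note ims = im ie idl ir ia
  have h1: "meq (tri e p) (tri (tri e c) p) (hc (tri e c) rhoe mid) (hc (tri e c) (mcomp (hc e mid epse) dele) mid)"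
    by (rule hc_cong[OF ir is_map_mid meq_sym[OF CR] meq_refl])
  have h2: "meq (tri e p) (tri (tri e c) p) (hc (tri e c) (mcomp (hc e mid epse) dele) mid) (mcomp (hc (tri e c) (hc e mid epse) mid) (hc (tri e e) dele mid))"
    using meq_sym[OF hc_comp[OF idl is_map_hc[OF is_map_mid ie] is_map_mid[of p] is_map_mid[of p]]] by simp
  have h3: "meq (tri (tri e e) p) (tri e (tri c p)) (mcomp (assoc e c) (hc (tri e c) (hc e mid epse) mid)) (mcomp (hc e mid (hc c epse mid)) (assoc e e))"
    by (rule assoc_nat[OF is_map_mid ie is_map_mid])
  have h4: "meq (tri e p) (tri e (tri c p)) (mcomp (hc e mid (hc c epse mid)) (hc e mid alpha)) (hc e mid (mcomp (hc c epse mid) alpha))"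
    using hc_comp[OF is_map_mid[of e] is_map_mid[of e] ia is_map_hc[OF ie is_map_mid[of p]]] by simp
  have "meq p (tri e (tri c p)) (mcomp (assoc e c) (mcomp (hc (tri e c) rhoe mid) alpha))
      (mcomp (assoc e c) (mcomp (hc (tri e c) (mcomp (hc e mid epse) dele) mid) alpha))"
    by (rule meq_refl h1 meq_comp ims)+
  also have "meq p (tri e (tri c p)) \<dots> (mcomp (assoc e c) (mcomp (mcomp (hc (tri e c) (hc e mid epse) mid) (hc (tri e e) dele mid)) alpha))"
    by (rule meq_refl h2 meq_comp ims)+
  also have "\<dots> = mcomp (mcomp (assoc e c) (hc (tri e c) (hc e mid epse) mid)) (mcomp (hc (tri e e) dele mid) alpha)" by simp
  also have "meq p (tri e (tri c p)) \<dots> (mcomp (mcomp (hc e mid (hc c epse mid)) (assoc e e)) (mcomp (hc (tri e e) dele mid) alpha))"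
    by (rule meq_refl h3 meq_comp ims)+
  also have "\<dots> = mcomp (hc e mid (hc c epse mid)) (mcomp (assoc e e) (mcomp (hc (tri e e) dele mid) alpha))" by simp
  also have "meq p (tri e (tri c p)) \<dots> (mcomp (hc e mid (hc c epse mid)) (mcomp (hc e mid alpha) alpha))"
    by (rule meq_refl aA meq_comp ims)+
  also have "\<dots> = mcomp (mcomp (hc e mid (hc c epse mid)) (hc e mid alpha)) alpha" by simp
  also have "meq p (tri e (tri c p)) \<dots> (mcomp (hc e mid (mcomp (hc c epse mid) alpha)) alpha)"
    by (rule meq_refl h4 meq_comp ims)+
  finally show ?thesis .
qed

lemma F4:
  assumes ie: "is_map e c epse" and idl: "is_map e (tri e e) dele" and il: "is_map e (tri c e) lame"
    and ia: "is_map p (tri e p) alpha"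
    and CL: "meq e (tri c e) (mcomp (hc c epse mid) dele) lame"
    and aA: "meq p (tri e (tri e p)) (mcomp (assoc e e) (mcomp (hc (tri e e) dele mid) alpha)) (mcomp (hc e mid alpha) alpha)"
  shows "meq p (tri c (tri e p)) (mcomp (assoc c e) (mcomp (hc (tri c e) lame mid) alpha))
           (mcomp (hc c mid alpha) (mcomp (hc c epse mid) alpha))"
proof -
  note ims = im ie idl il ia
  have h1: "meq (tri e p) (tri (tri c e) p) (hc (tri c e) lame mid) (hc (tri c e) (mcomp (hc c epse mid) dele) mid)"
    by (rule hc_cong[OF il is_map_mid meq_sym[OF CL] meq_refl])
  have h2: "meq (tri e p) (tri (tri c e) p) (hc (tri c e) (mcomp (hc c epse mid) dele) mid) (mcomp (hc (tri c e) (hc c epse mid) mid) (hc (tri e e) dele mid))"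
    using meq_sym[OF hc_comp[OF idl is_map_hc[OF ie is_map_mid] is_map_mid[of p] is_map_mid[of p]]] by simp
  have h3: "meq (tri (tri e e) p) (tri c (tri e p)) (mcomp (assoc c e) (hc (tri c e) (hc c epse mid) mid)) (mcomp (hc c epse (hc e mid mid)) (assoc e e))"
    by (rule assoc_nat[OF ie is_map_mid is_map_mid])
  have h3b: "meq (tri e (tri e p)) (tri c (tri e p)) (hc c epse (hc e mid mid)) (hc c epse mid)"
    by (rule hc_cong[OF ie is_map_hc[OF is_map_mid is_map_mid] meq_refl hc_mid])
  have h4: "meq (tri e p) (tri c (tri e p)) (mcomp (hc c epse mid) (hc e mid alpha)) (hc c epse alpha)"
    using hc_comp[OF is_map_mid[of e] ie ia is_map_mid[of "tri e p"]] by simp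
  have h5: "meq (tri e p) (tri c (tri e p)) (hc c epse alpha) (mcomp (hc c mid alpha) (hc c epse mid))"
    using meq_sym[OF hc_comp[OF ie is_map_mid[of c] is_map_mid[of p] ia]] by simp
  have "meq p (tri c (tri e p)) (mcomp (assoc c e) (mcomp (hc (tri c e) lame mid) alpha))
      (mcomp (assoc c e) (mcomp (hc (tri c e) (mcomp (hc c epse mid) dele) mid) alpha))"
    by (rule meq_refl h1 meq_comp ims)+
  also have "meq p (tri c (tri e p)) \<dots> (mcomp (assoc c e) (mcomp (mcomp (hc (tri c e) (hc c epse mid) mid) (hc (tri e e) dele mid)) alpha))"
    by (rule meq_refl h2 meq_comp ims)+
  also have "\<dots> = mcomp (mcomp (assoc c e) (hc (tri c e) (hc c epse mid) mid)) (mcomp (hc (tri e e) dele mid) alpha)" by simp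
  also have "meq p (tri c (tri e p)) \<dots> (mcomp (mcomp (hc c epse (hc e mid mid)) (assoc e e)) (mcomp (hc (tri e e) dele mid) alpha))"
    by (rule meq_refl h3 meq_comp ims)+
  also have "meq p (tri c (tri e p)) \<dots> (mcomp (mcomp (hc c epse mid) (assoc e e)) (mcomp (hc (tri e e) dele mid) alpha))"
    by (rule meq_refl h3b meq_comp ims)+
  also have "\<dots> = mcomp (hc c epse mid) (mcomp (assoc e e) (mcomp (hc (tri e e) dele mid) alpha))" by simp
  also have "meq p (tri c (tri e p)) \<dots> (mcomp (hc c epse mid) (mcomp (hc e mid alpha) alpha))"
    by (rule meq_refl aA meq_comp ims)+
  also have "\<dots> = mcomp (mcomp (hc c epse mid) (hc e mid alpha)) alpha" by simp
  also have "meq p (tri c (tri e p)) \<dots> (mcomp (hc c epse alpha) alpha)"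
    by (rule meq_refl h4 meq_comp ims)+
  also have "meq p (tri c (tri e p)) \<dots> (mcomp (mcomp (hc c mid alpha) (hc c epse mid)) alpha)"
    by (rule meq_refl h5 meq_comp ims)+
  also have "\<dots> = mcomp (hc c mid alpha) (mcomp (hc c epse mid) alpha)" by simp
  finally show ?thesis .
qed

lemma F5:
  assumes ie: "is_map e c epse" and ia: "is_map p (tri e p) alpha" and ib: "is_map q (tri e q) beta"
    and iff: "is_map p q f"
    and L: "meq p (tri e q) (mcomp (hc e mid f) alpha) (mcomp beta f)"
  shows "meq p (tri c q) (mcomp (hc c mid f) (mcomp (hc c epse mid) alpha)) (mcomp (mcomp (hc c epse mid) beta) f)"
proof -
  note ims = im ie ia ib iff
  have h1: "meq (tri e p) (tri c q) (mcomp (hc c mid f) (hc c epse mid)) (hc c epse f)"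
    using hc_comp[OF ie is_map_mid[of c] is_map_mid[of p] iff] by simp
  have h2: "meq (tri e p) (tri c q) (hc c epse f) (mcomp (hc c epse mid) (hc e mid f))"
    using meq_sym[OF hc_comp[OF is_map_mid[of e] ie iff is_map_mid[of q]]] by simp
  have "meq p (tri c q) (mcomp (hc c mid f) (mcomp (hc c epse mid) alpha)) (mcomp (mcomp (hc c mid f) (hc c epse mid)) alpha)"
    by (simp add: meq_refl)
  also have "meq p (tri c q) \<dots> (mcomp (hc c epse f) alpha)"
    by (rule meq_refl h1 meq_comp ims)+
  also have "meq p (tri c q) \<dots> (mcomp (mcomp (hc c epse mid) (hc e mid f)) alpha)"
    by (rule meq_refl h2 meq_comp ims)+
  also have "\<dots> = mcomp (hc c epse mid) (mcomp (hc e mid f) alpha)" by simp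
  also have "meq p (tri c q) \<dots> (mcomp (hc c epse mid) (mcomp beta f))"
    by (rule meq_refl L meq_comp ims)+
  also have "\<dots> = mcomp (mcomp (hc c epse mid) beta) f" by simp
  finally show ?thesis .
qed



theorem mainTheorem6:
  fixes c :: "('i,'a) poly" and epsc delc
    and d :: "('j,'b) poly" and epsd deld
    and e :: "('r,'s) poly" and lame rhoe epse dele
  assumes "comonoid c epsc delc"
    and "comonoid d epsd deld"
    and "comonad_on c epsc delc e lame rhoe epse dele"
  shows
    \<comment> \<open>e is a comonoid (counit epsc o epse, comultiplication dele) and epse is a comonoid hom e \<rightarrow> c\<close>
    "comonoid e (mcomp epsc epse) dele
     \<and> comonoid_hom e (mcomp epsc epse) dele c epsc delc epse
     \<comment> \<open>objects: (e,d)-bicomodule structures on a carrier p correspond to (c,d)-bicomodule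
         structures on p with a left e-comodule structure, same carrier and same right coaction\<close>
     \<and> (\<forall>(p :: ('k,'m) poly) alpha rho.
          bicomodule e (mcomp epsc epse) dele d epsd deld p alpha rho
          \<longleftrightarrow> (bicomodule c epsc delc d epsd deld p (mcomp (hc c epse mid) alpha) rho
               \<and> left_comonad_comodule c d e lame rhoe epse dele p
                    (mcomp (hc c epse mid) alpha) rho alpha))
     \<and> (\<forall>(p :: ('k,'m) poly) lam rho alpha.
          bicomodule c epsc delc d epsd deld p lam rho
          \<and> left_comonad_comodule c d e lame rhoe epse dele p lam rho alpha
          \<longrightarrow> meq p (tri c p) lam (mcomp (hc c epse mid) alpha))
     \<comment> \<open>morphisms: the same polynomial maps on both sides\<close>
     \<and> (\<forall>(p :: ('k,'m) poly) alpha rho (q :: ('n,'o) poly) beta sigma f.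
          bicomodule e (mcomp epsc epse) dele d epsd deld p alpha rho
          \<and> bicomodule e (mcomp epsc epse) dele d epsd deld q beta sigma
          \<longrightarrow> (bicomodule_map e d p alpha rho q beta sigma f
               \<longleftrightarrow> (bicomodule_map c d p (mcomp (hc c epse mid) alpha) rho
                                       q (mcomp (hc c epse mid) beta) sigma f
                    \<and> meq p (tri e q) (mcomp (hc e mid f) alpha) (mcomp beta f))))"
proof -
  note F = comonad_facts[OF assms(1) assms(3)]
  note iec = F(1) and idc = F(2) and il = F(3) and ir = F(4) and ie = F(5) and idl = F(6)
   and CL = F(9) and CR = F(10)
  have P12: "comonoid e (mcomp epsc epse) dele \<and> comonoid_hom e (mcomp epsc epse) dele c epsc delc epse"
    by (rule part12[OF assms(1) assms(3)])
  then have H: "meq e (tri c c) (mcomp delc epse) (mcomp (hc c epse epse) dele)"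
    unfolding comonoid_hom_def by blast
  have P3: "bicomodule e (mcomp epsc epse) dele d epsd deld p alpha rho
          \<longleftrightarrow> (bicomodule c epsc delc d epsd deld p (mcomp (hc c epse mid) alpha) rho
               \<and> left_comonad_comodule c d e lame rhoe epse dele p
                    (mcomp (hc c epse mid) alpha) rho alpha)" for p :: "('k,'m) poly" and alpha rho
  proof
    assume "bicomodule e (mcomp epsc epse) dele d epsd deld p alpha rho"
    then have ia: "is_map p (tri e p) alpha"
      and aL: "meq p p (mcomp lu (mcomp (hc ypoly (mcomp epsc epse) mid) alpha)) mid"
      and aA: "meq p (tri e (tri e p)) (mcomp (assoc e e) (mcomp (hc (tri e e) dele mid) alpha)) (mcomp (hc e mid alpha) alpha)"
      and R: "right_comodule d epsd deld p rho"
      and aC: "meq p (tri e (tri p d)) (mcomp (assoc e p) (mcomp (hc (tri e p) alpha mid) rho)) (mcomp (hc e mid rho) alpha)"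
      unfolding bicomodule_def left_comodule_def by blast+
    have irho: "is_map p (tri p d) rho" using R unfolding right_comodule_def by blast
    show "bicomodule c epsc delc d epsd deld p (mcomp (hc c epse mid) alpha) rho
               \<and> left_comonad_comodule c d e lame rhoe epse dele p
                    (mcomp (hc c epse mid) alpha) rho alpha"
      unfolding bicomodule_def left_comodule_def left_comonad_comodule_def lands_in_hcomp_def
      using is_map_comp[OF ia is_map_hc[OF ie is_map_mid]] counit_equiv[OF iec ie ia] aL
        F1[OF idc ie idl ia H aA] R F2[OF ie ia irho aC] ia F3[OF ie idl ir ia CR aA]
        F4[OF ie idl il ia CL aA] aC meq_refl aA
      by blast
  next
    assume "bicomodule c epsc delc d epsd deld p (mcomp (hc c epse mid) alpha) rho
               \<and> left_comonad_comodule c d e lame rhoe epse dele p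
                    (mcomp (hc c epse mid) alpha) rho alpha"
    then have lL: "meq p p (mcomp lu (mcomp (hc ypoly epsc mid) (mcomp (hc c epse mid) alpha))) mid"
      and R: "right_comodule d epsd deld p rho"
      and ia: "is_map p (tri e p) alpha"
      and aA: "meq p (tri e (tri e p)) (mcomp (assoc e e) (mcomp (hc (tri e e) dele mid) alpha)) (mcomp (hc e mid alpha) alpha)"
      and aC: "meq p (tri e (tri p d)) (mcomp (assoc e p) (mcomp (hc (tri e p) alpha mid) rho)) (mcomp (hc e mid rho) alpha)"
      unfolding bicomodule_def left_comodule_def left_comonad_comodule_def by blast+
    show "bicomodule e (mcomp epsc epse) dele d epsd deld p alpha rho"
      unfolding bicomodule_def left_comodule_def
      using ia counit_equiv[OF iec ie ia] lL aA R aC by blast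
  qed
  have P4: "bicomodule c epsc delc d epsd deld p lam rho
          \<and> left_comonad_comodule c d e lame rhoe epse dele p lam rho alpha
          \<longrightarrow> meq p (tri c p) lam (mcomp (hc c epse mid) alpha)" for p :: "('k,'m) poly" and lam rho alpha
    unfolding left_comonad_comodule_def using meq_sym by blast
  have P5: "bicomodule e (mcomp epsc epse) dele d epsd deld p alpha rho
          \<and> bicomodule e (mcomp epsc epse) dele d epsd deld q beta sigma
          \<longrightarrow> (bicomodule_map e d p alpha rho q beta sigma f
               \<longleftrightarrow> (bicomodule_map c d p (mcomp (hc c epse mid) alpha) rho
                                       q (mcomp (hc c epse mid) beta) sigma f
                    \<and> meq p (tri e q) (mcomp (hc e mid f) alpha) (mcomp beta f)))"
    for p :: "('k,'m) poly" and alpha rho and q :: "('n,'o) poly" and beta sigma f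
  proof
    assume "bicomodule e (mcomp epsc epse) dele d epsd deld p alpha rho
          \<and> bicomodule e (mcomp epsc epse) dele d epsd deld q beta sigma"
    then have ia: "is_map p (tri e p) alpha" and ib: "is_map q (tri e q) beta"
      unfolding bicomodule_def left_comodule_def by blast+
    show "bicomodule_map e d p alpha rho q beta sigma f
               \<longleftrightarrow> (bicomodule_map c d p (mcomp (hc c epse mid) alpha) rho
                                       q (mcomp (hc c epse mid) beta) sigma f
                    \<and> meq p (tri e q) (mcomp (hc e mid f) alpha) (mcomp beta f))"
      unfolding bicomodule_map_def using F5[OF ie ia ib] by blast
  qed
  show ?thesis using P12 P3 P4 P5 by blast
qed


end
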